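(* For every integer $r\ge 2$, the rightmost point of $P_r$ lies above the line $\ell_{r-1}$, and the leftmost point of $P_r$ lies below the line $\ell_{r-1}'$.
   Context: Define finite sets $P_r\subset\mathbb{Z}^2$ for integers $r\ge 0$ recursively: $P_0:=\{(0,0)\}$; for $r\ge 1$, $L_r:=P_{r-1}$, $R_r:=\{(x+\delta_r,\,y+\delta_r'):(x,y)\in L_r\}$ and $P_r:=L_r\cup R_r$, where $\delta_r:=3\cdot 4^{r-1}$ and $\delta_r':=(3r+1)\cdot 4^{r-1}$. For $r\ge 1$, let $\ell_r$ be the straight line through the rightmost point (largest $x$-coordinate) of $L_r$ and the leftmost point (smallest $x$-coordinate) of $R_r$. For $r\ge 2$, $R_r$ is the translate of $P_{r-1}=L_{r-1}\cup R_{r-1}$ by the vector $(\delta_r,\delta_r')$; let $\ell_{r-1}'$ denote the translate of the line $\ell_{r-1}$ by $(\delta_r,\delta_r')$. *)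

theory Defs
  imports Complex_Main
begin

type_synonym pt = "int \<times> int"

definition delta :: "nat \<Rightarrow> int" where
  "delta r = 3 * 4 ^ (r - 1)"

definition delta' :: "nat \<Rightarrow> int" where
  "delta' r = (3 * int r + 1) * 4 ^ (r - 1)"

definition translate :: "int \<Rightarrow> int \<Rightarrow> pt \<Rightarrow> pt" where
  "translate a b p = (fst p + a, snd p + b)"

fun P :: "nat \<Rightarrow> pt set" where
  "P 0 = {(0, 0)}"
| "P (Suc n) = P n \<union> translate (delta (Suc n)) (delta' (Suc n)) ` P n"

definition L :: "nat \<Rightarrow> pt set" where
  "L r = P (r - 1)"

definition R :: "nat \<Rightarrow> pt set" where
  "R r = translate (delta r) (delta' r) ` L r"

definition rightmost :: "pt set \<Rightarrow> pt" where
  "rightmost S = (THE p. p \<in> S \<and> (\<forall>q\<in>S. q \<noteq> p \<longrightarrow> fst q < fst p))"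

definition leftmost :: "pt set \<Rightarrow> pt" where
  "leftmost S = (THE p. p \<in> S \<and> (\<forall>q\<in>S. q \<noteq> p \<longrightarrow> fst q > fst p))"

(* line ell_r, given by the two points it passes through *)
definition ell :: "nat \<Rightarrow> pt \<times> pt" where
  "ell r = (rightmost (L r), leftmost (R r))"

(* ell'_{r-1}: translate of ell_{r-1} by (delta r, delta' r) *)
definition ell' :: "nat \<Rightarrow> pt \<times> pt" where
  "ell' r = (translate (delta r) (delta' r) (fst (ell (r - 1))),
             translate (delta r) (delta' r) (snd (ell (r - 1))))"

(* value at abscissa x of the non-vertical line through a and b *)
definition line_val :: "pt \<times> pt \<Rightarrow> real \<Rightarrow> real" where
  "line_val l x = (let a = fst l; b = snd l in
     real_of_int (snd a) + real_of_int (snd b - snd a) * (x - real_of_int (fst a))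
       / real_of_int (fst b - fst a))"

definition above :: "pt \<Rightarrow> pt \<times> pt \<Rightarrow> bool" where
  "above p l \<longleftrightarrow> real_of_int (snd p) > line_val l (real_of_int (fst p))"

definition below :: "pt \<Rightarrow> pt \<times> pt \<Rightarrow> bool" where
  "below p l \<longleftrightarrow> real_of_int (snd p) < line_val l (real_of_int (fst p))"

end

theory Submission
  imports Defs
begin

lemma P_facts:
  "(0,0) \<in> P n \<and> (4^n - 1, int n * 4^n) \<in> P n \<and>
   (\<forall>q\<in>P n. 0 \<le> fst q \<and> fst q \<le> 4^n - 1) \<and>
   (\<forall>q\<in>P n. q \<noteq> (0,0) \<longrightarrow> fst q > 0) \<and>
   (\<forall>q\<in>P n. q \<noteq> (4^n - 1, int n * 4^n) \<longrightarrow> fst q < 4^n - 1)"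
proof (induction n)
  case 0
  then show ?case by simp
next
  case (Suc n)
  have d: "delta (Suc n) = 3 * 4^n" "delta' (Suc n) = (3 * int n + 4) * 4^n"
    by (simp_all add: delta_def delta'_def algebra_simps)
  have T: "translate (delta (Suc n)) (delta' (Suc n)) (4^n - 1, int n * 4^n)
      = (4^Suc n - 1, int (Suc n) * 4^Suc n)"
    by (simp add: translate_def d algebra_simps)
  have pos: "(0::int) < 4^n" by simp
  show ?case
  proof (intro conjI)
    show "(0,0) \<in> P (Suc n)" using Suc by simp
    show "(4^Suc n - 1, int (Suc n) * 4^Suc n) \<in> P (Suc n)"
      using Suc T[symmetric] by (simp only: P.simps) blast
    show "\<forall>q\<in>P (Suc n). 0 \<le> fst q \<and> fst q \<le> 4^Suc n - 1"
      using Suc pos by (auto simp: translate_def d)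
    show "\<forall>q\<in>P (Suc n). q \<noteq> (0,0) \<longrightarrow> fst q > 0"
      using Suc pos by (auto simp: translate_def d)
    show "\<forall>q\<in>P (Suc n). q \<noteq> (4^Suc n - 1, int (Suc n) * 4^Suc n) \<longrightarrow> fst q < 4^Suc n - 1"
    proof (intro ballI impI)
      fix q assume q: "q \<in> P (Suc n)" "q \<noteq> (4^Suc n - 1, int (Suc n) * 4^Suc n)"
      show "fst q < 4^Suc n - 1"
      proof (cases "q \<in> P n")
        case True then show ?thesis using Suc pos by force
      next
        case False
        then obtain q' where q': "q' \<in> P n" "q = translate (delta (Suc n)) (delta' (Suc n)) q'"
          using q by auto
        have "q' \<noteq> (4^n - 1, int n * 4^n)" using q q' T by auto
        then have "fst q' < 4^n - 1" using Suc q' by blast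
        then show ?thesis using q' by (simp add: translate_def d)
      qed
    qed
  qed
qed

lemma rightmost_eq: "p \<in> S \<Longrightarrow> (\<forall>q\<in>S. q \<noteq> p \<longrightarrow> fst q < fst p) \<Longrightarrow> rightmost S = p"
  unfolding rightmost_def
  by (rule the_equality) (auto, force)

lemma leftmost_eq: "p \<in> S \<Longrightarrow> (\<forall>q\<in>S. q \<noteq> p \<longrightarrow> fst q > fst p) \<Longrightarrow> leftmost S = p"
  unfolding leftmost_def
  by (rule the_equality) (auto, force)

lemma rightP: "rightmost (P n) = (4^n - 1, int n * 4^n)"
  using P_facts[of n] by (intro rightmost_eq) auto

lemma leftP: "leftmost (P n) = (0,0)"
  using P_facts[of n] by (intro leftmost_eq) auto

lemma leftR: "leftmost (R k) = (delta k, delta' k)"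
proof (rule leftmost_eq)
  show "(delta k, delta' k) \<in> R k" using P_facts[of "k-1"]
    unfolding R_def L_def by (force simp: translate_def)
  show "\<forall>q\<in>R k. q \<noteq> (delta k, delta' k) \<longrightarrow> fst q > fst (delta k, delta' k)"
    using P_facts[of "k-1"] unfolding R_def L_def by (auto simp: translate_def)
qed

theorem lemma2:
  fixes r :: nat
  assumes "r \<ge> 2"
  shows "above (rightmost (P r)) (ell (r - 1)) \<and> below (leftmost (P r)) (ell' r)"
proof -
  obtain k where r: "r = Suc (Suc k)" using assms by (metis add_2_eq_Suc le_Suc_ex)
  define t :: int where "t = 4^k"
  have t: "t > 0" by (simp add: t_def)
  have e1: "ell (Suc k) = ((t - 1, int k * t), (3*t, (3 * int k + 4) * t))"
    unfolding ell_def r L_def by (simp add: rightP leftR t_def delta_def delta'_def algebra_simps)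
  have e2: "ell' (Suc (Suc k)) = ((13*t - 1, int k * t + 4 * (3 * int k + 7) * t),
        (15*t, (3 * int k + 4) * t + 4 * (3 * int k + 7) * t))"
    unfolding ell'_def diff_Suc_1 e1 by (simp add: translate_def delta_def delta'_def t_def algebra_simps)
  have rp: "rightmost (P (Suc (Suc k))) = (16*t - 1, (int k + 2) * (16 * t))"
    unfolding rightP by (simp add: t_def algebra_simps)
  define T where "T = real_of_int t"
  define K where "K = real k"
  have T: "T > 0" using t by (simp add: T_def)
  have K: "K \<ge> 0" by (simp add: K_def)
  have A: "(K + 2) * (16 * T) > K * T + ((3*K+4)*T - K*T) * (16*T - 1 - (T - 1)) / (3*T - (T - 1))"
  proof -
    have den: "3*T - (T - 1) > 0" using T by simp
    have "((3*K+4)*T - K*T) * (16*T - 1 - (T - 1)) < ((K + 2) * (16 * T) - K * T) * (3*T - (T - 1))"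
      using T K by (simp add: algebra_simps) (smt (verit) mult_nonneg_nonneg mult_pos_pos)
    then show ?thesis using den by (simp add: divide_less_eq algebra_simps)
  qed
  have B: "0 < (K * T + 4 * (3 * K + 7) * T) +
      (((3 * K + 4) * T + 4 * (3 * K + 7) * T) - (K * T + 4 * (3 * K + 7) * T)) * (0 - (13*T - 1))
      / (15*T - (13*T - 1))"
  proof -
    have den: "15*T - (13*T - 1) > 0" using T by simp
    have "((3 * K + 4) * T - K * T) * (13*T - 1) < (K * T + 4 * (3 * K + 7) * T) * (15*T - (13*T - 1))"
      using T K by (simp add: algebra_simps) (smt (verit) mult_nonneg_nonneg mult_pos_pos)
    then have "0 < ((K * T + 4 * (3 * K + 7) * T) * (15*T - (13*T - 1)) +
      (((3 * K + 4) * T + 4 * (3 * K + 7) * T) - (K * T + 4 * (3 * K + 7) * T)) * (0 - (13*T - 1)))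
      / (15*T - (13*T - 1))" using den by (intro divide_pos_pos) (auto simp: algebra_simps)
    also have "\<dots> = (K * T + 4 * (3 * K + 7) * T) +
      (((3 * K + 4) * T + 4 * (3 * K + 7) * T) - (K * T + 4 * (3 * K + 7) * T)) * (0 - (13*T - 1))
      / (15*T - (13*T - 1))" using den by (simp add: add_divide_distrib)
    finally show ?thesis .
  qed
  have neg: "\<And>y a d::real. y * (1 - a) / d = - (y * (a - 1) / d)"
    by (simp add: minus_divide_left right_diff_distrib)
  show ?thesis
    using A B neg unfolding above_def below_def line_val_def rp r diff_Suc_1 e1 e2 leftP P.simps[symmetric]
    by (simp add: T_def K_def Let_def)
qed

end
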